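(* Let $m,n$ be positive integers. Then $S_{mn+1}\equiv4(mn+1)S_{mn}\pmod{m^2n^2}$.
   Context: $(S_n)_{n\ge0}$ is the integer sequence defined by $S_0=1$, $S_1=4$ and $(n+1)^2S_{n+1}=4(3n^2+3n+1)S_n-32n^2S_{n-1}$ for $n\ge1$; equivalently $S_n=\sum_{k=0}^n\binom nk\binom{2k}k\binom{2n-2k}{n-k}$. *)

theory Defs
  imports Main "HOL-Number_Theory.Cong"
begin

definition S :: "nat \<Rightarrow> int" where
  "S n = (\<Sum>k=0..n. int (n choose k) * int ((2*k) choose k) * int ((2*n - 2*k) choose (n - k)))"

end

theory Submission
  imports Complex_Main Defs
begin

definition ff :: "nat \<Rightarrow> nat \<Rightarrow> real" where
  "ff i j = fact (i+j) * fact (2*i) * fact (2*j) / (fact i ^3 * fact j ^3)"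

lemma ff_j0: "ff i (Suc j) = (real i+real j+1)*(2*(real j+1))*(2*real j+1)/(real j+1)^3 * ff i j"
proof -
  have e: "2 * Suc j = Suc (Suc (2*j))" by simp
  show ?thesis unfolding ff_def e
    by (simp add: fact_Suc field_simps power3_eq_cube)
qed

lemma ff_i0: "ff (Suc i) j = (real i+real j+1)*(2*(real i+1))*(2*real i+1)/(real i+1)^3 * ff i j"
proof -
  have e: "2 * Suc i = Suc (Suc (2*i))" by simp
  show ?thesis unfolding ff_def e
    by (simp add: fact_Suc field_simps power3_eq_cube)
qed

lemma canc: "(c::real) \<noteq> 0 \<Longrightarrow> c^2 * (a*(2*c)*b/c^3 * X) = 2*a*b*X"
  by (simp add: field_simps power2_eq_square power3_eq_cube)

lemma ff_j: "(real j+1)^2 * ff i (Suc j) = 2*(real i+real j+1)*(2*real j+1) * ff i j"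
  unfolding ff_j0 by (rule canc) linarith

lemma ff_i: "(real i+1)^2 * ff (Suc i) j = 2*(real i+real j+1)*(2*real i+1) * ff i j"
  unfolding ff_i0 by (rule canc) linarith

lemma canc2: "(c::real) \<noteq> 0 \<Longrightarrow> a * (c*X) / c = a*X"
  by simp

definition Pp :: "real \<Rightarrow> real \<Rightarrow> real" where
  "Pp n k = 8*n*k^2 - (8*n^2+8*n-4)*k + 4*n^2+2*n-2"

lemma gen:
  fixes i j :: nat
  shows "(real (i+1+j)+2)^2 * ff (i+1) (j+2) - 4*(3*(real (i+1+j)+1)^2+3*(real (i+1+j)+1)+1)*ff (i+1) (j+1)
     + 32*(real (i+1+j)+1)^2 * ff (i+1) j
   = Pp (real (i+1+j)+1) (real i+2) * ff (i+1) (j+1) / (2*real j+1)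
     - Pp (real (i+1+j)+1) (real i+1) * ff i (j+2) / (2*real j+3)"
proof -
  define u where "u = real i"
  define v where "v = real j"
  have u0: "u \<ge> 0" "v \<ge> 0" unfolding u_def v_def by auto
  have nz: "(u+1)^2 \<noteq> 0" "(v+1)^2 \<noteq> 0" "(v+2)^2 \<noteq> 0" "2*v+1 \<noteq> 0" "2*v+3 \<noteq> 0" using u0 by simp_all
  define w where "w = ff i j / ((u+1)^2*(v+1)^2*(v+2)^2)"
  have x: "ff i j = w * ((u+1)^2*(v+1)^2*(v+2)^2)" unfolding w_def using nz by simp
  have a1: "(v+1)^2 * ff i (j+1) = 2*(u+v+1)*(2*v+1) * ff i j" using ff_j[of j i]
    unfolding u_def v_def by simp
  have a2: "(v+2)^2 * ff i (j+2) = 2*(u+v+2)*(2*v+3) * ff i (j+1)" using ff_j[of "j+1" i]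
    unfolding u_def v_def by (simp add: algebra_simps)
  have b0: "(u+1)^2 * ff (i+1) j = 2*(u+v+1)*(2*u+1) * ff i j" using ff_i[of i j]
    unfolding u_def v_def by simp
  have b1: "(u+1)^2 * ff (i+1) (j+1) = 2*(u+v+2)*(2*u+1) * ff i (j+1)" using ff_i[of i "j+1"]
    unfolding u_def v_def by (simp add: algebra_simps)
  have b2: "(u+1)^2 * ff (i+1) (j+2) = 2*(u+v+3)*(2*u+1) * ff i (j+2)" using ff_i[of i "j+2"]
    unfolding u_def v_def by (simp add: algebra_simps)
  have "(v+1)^2 * ff i (j+1) = (v+1)^2 * (2*(u+v+1)*(2*v+1)*(u+1)^2*(v+2)^2 * w)"
    unfolding a1 x by algebra
  hence c1: "ff i (j+1) = 2*(u+v+1)*(2*v+1)*(u+1)^2*(v+2)^2 * w" using nz(2) by simp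
  have "(v+2)^2 * ff i (j+2) = (v+2)^2 * (4*(u+v+1)*(u+v+2)*(2*v+1)*(2*v+3)*(u+1)^2 * w)"
    unfolding a2 c1 by algebra
  hence c2: "ff i (j+2) = 4*(u+v+1)*(u+v+2)*(2*v+1)*(2*v+3)*(u+1)^2 * w" using nz(3) by simp
  have "(u+1)^2 * ff (i+1) j = (u+1)^2 * (2*(u+v+1)*(2*u+1)*(v+1)^2*(v+2)^2 * w)"
    unfolding b0 x by algebra
  hence d0: "ff (i+1) j = 2*(u+v+1)*(2*u+1)*(v+1)^2*(v+2)^2 * w" using nz(1) by simp
  have "(u+1)^2 * ff (i+1) (j+1) = (u+1)^2 * ((2*v+1) * (4*(u+v+1)*(u+v+2)*(2*u+1)*(v+2)^2 * w))"
    unfolding b1 c1 by algebra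
  hence d1: "ff (i+1) (j+1) = (2*v+1) * (4*(u+v+1)*(u+v+2)*(2*u+1)*(v+2)^2 * w)" using nz(1) by simp
  have "(u+1)^2 * ff (i+1) (j+2) = (u+1)^2 * (8*(u+v+1)*(u+v+2)*(u+v+3)*(2*v+1)*(2*v+3)*(2*u+1) * w)"
    unfolding b2 c2 by algebra
  hence d2: "ff (i+1) (j+2) = 8*(u+v+1)*(u+v+2)*(u+v+3)*(2*v+1)*(2*v+3)*(2*u+1) * w" using nz(1) by simp
  have c2': "ff i (j+2) = (2*v+3) * (4*(u+v+1)*(u+v+2)*(2*v+1)*(u+1)^2 * w)" unfolding c2 by algebra
  have r: "real (i+1+j) = u+v+1" unfolding u_def v_def by simp
  have e1: "Pp (real (i+1+j)+1) (real i+2) * ff (i+1) (j+1) / (2*real j+1) = Pp (u+v+1+1) (u+2) * (4*(u+v+1)*(u+v+2)*(2*u+1)*(v+2)^2 * w)"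
    unfolding d1 r u_def[symmetric] v_def[symmetric] by (rule canc2) (rule nz(4))
  have e2: "Pp (real (i+1+j)+1) (real i+1) * ff i (j+2) / (2*real j+3) = Pp (u+v+1+1) (u+1) * (4*(u+v+1)*(u+v+2)*(2*v+1)*(u+1)^2 * w)"
    unfolding c2' r u_def[symmetric] v_def[symmetric] by (rule canc2) (rule nz(5))
  show ?thesis unfolding e1 e2 unfolding r d2 d1 d0 Pp_def
    by algebra
qed

definition Fr :: "nat \<Rightarrow> nat \<Rightarrow> real" where
  "Fr n k = real (n choose k) * real ((2*k) choose k) * real ((2*n - 2*k) choose (n-k))"

lemma Fr_ff: "k \<le> n \<Longrightarrow> Fr n k = ff k (n-k)"
proof -
  assume kn: "k \<le> n"
  have e1: "2*n-2*k = 2*(n-k)" by simp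
  have e2: "2*(n-k) - (n-k) = n-k" by simp
  have e3: "2*k - k = k" by simp
  have e4: "k + (n-k) = n" using kn by simp
  have b1: "real (n choose k) = fact n/(fact k*fact(n-k))" by (rule binomial_fact[OF kn])
  have b2: "real ((2*k) choose k) = fact (2*k)/(fact k*fact k)"
    using binomial_fact[of k "2*k", where 'a=real] e3 by simp
  have b3: "real ((2*(n-k)) choose (n-k)) = fact (2*(n-k))/(fact (n-k)*fact (n-k))"
    using binomial_fact[of "n-k" "2*(n-k)", where 'a=real] e2 by simp
  show ?thesis unfolding Fr_def ff_def e1 b1 b2 b3 e4
    by (simp add: field_simps power3_eq_cube)
qed

lemma Fr_zero: "n < k \<Longrightarrow> Fr n k = 0"
  unfolding Fr_def by simp


lemma caseA:
  fixes p :: nat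
  shows "(real p+2)^2 * ff 0 (p+2) - 4*(3*(real p+1)^2+3*(real p+1)+1)*ff 0 (p+1) + 32*(real p+1)^2 * ff 0 p
    = Pp (real p+1) 1 * ff 0 (p+1) / (2*(real p+1) - 2*1 + 1)"
proof -
  define v where "v = real p"
  have v0: "v \<ge> 0" unfolding v_def by auto
  have nz: "(v+1)^2 \<noteq> 0" "(v+2)^2 \<noteq> 0" "2*v+1 \<noteq> 0" using v0 by simp_all
  define w where "w = ff 0 p / ((v+1)^2*(v+2)^2)"
  have x: "ff 0 p = w * ((v+1)^2*(v+2)^2)" unfolding w_def using nz by simp
  have a1: "(v+1)^2 * ff 0 (p+1) = 2*(v+1)*(2*v+1) * ff 0 p" using ff_j[of p 0]
    unfolding v_def by simp
  have a2: "(v+2)^2 * ff 0 (p+2) = 2*(v+2)*(2*v+3) * ff 0 (p+1)" using ff_j[of "p+1" 0]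
    unfolding v_def by (simp add: algebra_simps)
  have "(v+1)^2 * ff 0 (p+1) = (v+1)^2 * (2*(v+1)*(2*v+1)*(v+2)^2 * w)"
    unfolding a1 x by algebra
  hence c1: "ff 0 (p+1) = 2*(v+1)*(2*v+1)*(v+2)^2 * w" using nz(1) by simp
  have "(v+2)^2 * ff 0 (p+2) = (v+2)^2 * (4*(v+1)*(v+2)*(2*v+1)*(2*v+3) * w)"
    unfolding a2 c1 by algebra
  hence c2: "ff 0 (p+2) = 4*(v+1)*(v+2)*(2*v+1)*(2*v+3) * w" using nz(2) by simp
  have c1': "ff 0 (p+1) = (2*v+1) * (2*(v+1)*(v+2)^2 * w)" unfolding c1 by algebra
  have dd: "2*(v+1) - 2*1 + 1 = 2*v+1" by simp
  have e1: "Pp (v+1) 1 * ff 0 (p+1) / (2*(v+1) - 2*1 + 1) = Pp (v+1) 1 * (2*(v+1)*(v+2)^2 * w)"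
    unfolding dd c1' by (rule canc2) (rule nz(3))
  show ?thesis unfolding v_def[symmetric] e1 unfolding c2 c1 x Pp_def
    by (simp add: algebra_simps power2_eq_square)
qed

lemma caseC:
  fixes p :: nat
  shows "(real p+2)^2 * ff (p+1) 1 - 4*(3*(real p+1)^2+3*(real p+1)+1)*ff (p+1) 0
    = Pp (real p+1) (real p+2) * ff (p+1) 0 / (2*(real p+1) - 2*(real p+2) + 1)
     - Pp (real p+1) (real p+1) * ff p 1 / (2*(real p+1) - 2*(real p+1) + 1)"
proof -
  define u where "u = real p"
  have u0: "u \<ge> 0" unfolding u_def by auto
  have nz: "(u+1)^2 \<noteq> 0" using u0 by simp
  define w where "w = ff p 0 / (u+1)^2"
  have x: "ff p 0 = w * (u+1)^2" unfolding w_def using nz by simp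
  have a1: "ff p 1 = 2*(u+1) * ff p 0" using ff_j[of 0 p] unfolding u_def by simp
  have b0: "(u+1)^2 * ff (p+1) 0 = 2*(u+1)*(2*u+1) * ff p 0" using ff_i[of p 0]
    unfolding u_def by simp
  have b1: "(u+1)^2 * ff (p+1) 1 = 2*(u+2)*(2*u+1) * ff p 1" using ff_i[of p 1]
    unfolding u_def by (simp add: algebra_simps)
  have c1: "ff p 1 = 2*(u+1)^3 * w" unfolding a1 x by algebra
  have "(u+1)^2 * ff (p+1) 0 = (u+1)^2 * (2*(u+1)*(2*u+1) * w)" unfolding b0 x by algebra
  hence d0: "ff (p+1) 0 = 2*(u+1)*(2*u+1) * w" using nz by simp
  have "(u+1)^2 * ff (p+1) 1 = (u+1)^2 * (4*(u+2)*(2*u+1)*(u+1) * w)" unfolding b1 c1 by algebra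
  hence d1: "ff (p+1) 1 = 4*(u+2)*(2*u+1)*(u+1) * w" using nz by simp
  have q1: "2*(u+1) - 2*(u+2) + 1 = -1" by simp
  have q2: "2*(u+1) - 2*(u+1) + 1 = 1" by simp
  show ?thesis unfolding u_def[symmetric] q1 q2 unfolding d0 d1 c1 Pp_def
    by (simp add: algebra_simps power2_eq_square power3_eq_cube)
qed

lemma caseD:
  fixes p :: nat
  shows "(real p+2)^2 * ff (p+2) 0
    = 0 - Pp (real p+1) (real p+2) * ff (p+1) 0 / (2*(real p+1) - 2*(real p+2) + 1)"
proof -
  define u where "u = real p"
  have b: "(u+2)^2 * ff (p+2) 0 = 2*(u+2)*(2*u+3) * ff (p+1) 0" using ff_i[of "p+1" 0]
    unfolding u_def by (simp add: algebra_simps)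
  have q1: "2*(u+1) - 2*(u+2) + 1 = -1" by simp
  show ?thesis unfolding u_def[symmetric] q1 b Pp_def
    by (simp add: algebra_simps power2_eq_square)
qed


definition G :: "nat \<Rightarrow> nat \<Rightarrow> real" where
  "G p k = (if k = 0 then 0 else Pp (real p+1) (real k) * Fr (p+1) (k-1) / (2*(real p+1) - 2*real k + 1))"

lemma pw:
  assumes "k \<le> p+2"
  shows "(real p+2)^2 * Fr (p+2) k - 4*(3*(real p+1)^2+3*(real p+1)+1) * Fr (p+1) k + 32*(real p+1)^2 * Fr p k
    = G p (Suc k) - G p k"
proof -
  consider "k = 0" | "1 \<le> k \<and> k \<le> p" | "k = p+1" | "k = p+2" using assms by linarith
  then show ?thesis
  proof cases
    case 1
    have f1: "Fr (p+2) 0 = ff 0 (p+2)" "Fr (p+1) 0 = ff 0 (p+1)" "Fr p 0 = ff 0 p" by (simp_all add: Fr_ff)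
    have G1: "G p (Suc 0) = Pp (real p+1) 1 * ff 0 (p+1) / (2*(real p+1) - 2*1 + 1)"
      unfolding G_def using Fr_ff[of 0 "p+1"] by simp
    have G0: "G p 0 = 0" unfolding G_def by simp
    show ?thesis unfolding 1 f1 G1 G0 using caseA[of p] by simp
  next
    case 2
    obtain i where k: "k = Suc i" using 2 by (cases k) auto
    obtain j where p: "p = i+1+j" using 2 k by (metis Suc_eq_plus1 le_iff_add)
    have f1: "Fr (i+1+j+2) (Suc i) = ff (i+1) (j+2)" "Fr (i+1+j+1) (Suc i) = ff (i+1) (j+1)"
      "Fr (i+1+j) (Suc i) = ff (i+1) j" by (simp_all add: Fr_ff)
    have d1: "2*(real (i+1+j)+1) - 2*real (Suc (Suc i)) + 1 = 2*real j+1" by simp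
    have d2: "2*(real (i+1+j)+1) - 2*real (Suc i) + 1 = 2*real j+3" by simp
    have r1: "real (Suc (Suc i)) = real i + 2" "real (Suc i) = real i + 1" by simp_all
    have G1: "G (i+1+j) (Suc (Suc i)) = Pp (real (i+1+j)+1) (real i+2) * ff (i+1) (j+1) / (2*real j+1)"
      unfolding G_def d1 using Fr_ff[of "i+1" "i+1+j+1"] by (simp add: r1 add_ac)
    have G0: "G (i+1+j) (Suc i) = Pp (real (i+1+j)+1) (real i+1) * ff i (j+2) / (2*real j+3)"
      unfolding G_def d2 using Fr_ff[of "i" "i+1+j+1"] by (simp add: r1 add_ac)
    show ?thesis unfolding k p f1 G1 G0 by (rule gen)
  next
    case 3
    have f1: "Fr (p+2) (p+1) = ff (p+1) 1" "Fr (p+1) (p+1) = ff (p+1) 0" "Fr p (p+1) = 0"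
      by (simp_all add: Fr_ff Fr_zero)
    have G1: "G p (Suc (p+1)) = Pp (real p+1) (real p+2) * ff (p+1) 0 / (2*(real p+1) - 2*(real p+2) + 1)"
      unfolding G_def using Fr_ff[of "p+1" "p+1"] by (simp add: add_ac)
    have G0: "G p (p+1) = Pp (real p+1) (real p+1) * ff p 1 / (2*(real p+1) - 2*(real p+1) + 1)"
      unfolding G_def using Fr_ff[of "p" "p+1"] by (simp add: add_ac)
    show ?thesis unfolding 3 f1 G1 G0 using caseC[of p] by simp
  next
    case 4
    have f1: "Fr (p+2) (p+2) = ff (p+2) 0" "Fr (p+1) (p+2) = 0" "Fr p (p+2) = 0"
      by (simp_all add: Fr_ff Fr_zero)
    have G1: "G p (Suc (p+2)) = 0"
      unfolding G_def using Fr_zero[of "p+1" "p+2"] by simp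
    have G0: "G p (p+2) = Pp (real p+1) (real p+2) * ff (p+1) 0 / (2*(real p+1) - 2*(real p+2) + 1)"
      unfolding G_def using Fr_ff[of "p+1" "p+1"] by (simp add: numeral_2_eq_2 add_ac)
    show ?thesis unfolding 4 f1 G1 G0 using caseD[of p] by simp
  qed
qed

definition SR :: "nat \<Rightarrow> real" where "SR n = (\<Sum>k=0..n. Fr n k)"

lemma SR_ext: "SR n = (\<Sum>k=0..n+1. Fr n k)"
  unfolding SR_def by (simp add: Fr_zero)

lemma SR_ext2: "SR n = (\<Sum>k=0..n+2. Fr n k)"
  unfolding SR_def by (simp add: Fr_zero numeral_2_eq_2)

lemma recR: "(real p+2)^2 * SR (p+2) - 4*(3*(real p+1)^2+3*(real p+1)+1) * SR (p+1) + 32*(real p+1)^2 * SR p = 0"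
proof -
  have "(real p+2)^2 * SR (p+2) - 4*(3*(real p+1)^2+3*(real p+1)+1) * SR (p+1) + 32*(real p+1)^2 * SR p
     = (\<Sum>k=0..p+2. (real p+2)^2 * Fr (p+2) k - 4*(3*(real p+1)^2+3*(real p+1)+1) * Fr (p+1) k + 32*(real p+1)^2 * Fr p k)"
    unfolding SR_def[of "p+2"] SR_ext[of "p+1"] SR_ext2[of p] add.assoc one_add_one
    by (simp only: sum.distrib sum_subtractf sum_distrib_left)
  also have "\<dots> = (\<Sum>k=0..p+2. G p (Suc k) - G p k)"
    by (rule sum.cong[OF refl], rule pw, simp)
  also have "\<dots> = G p (Suc (p+2)) - G p 0" by (rule sum_Suc_diff) simp
  also have "\<dots> = 0" unfolding G_def using Fr_zero[of "p+1" "p+2"] by simp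
  finally show ?thesis .
qed


lemma S_real: "real_of_int (S n) = SR n"
  unfolding S_def SR_def Fr_def by simp

lemma recI: "(int p+2)^2 * S (p+2) - 4*(3*(int p+1)^2+3*(int p+1)+1) * S (p+1) + 32*(int p+1)^2 * S p = 0"
proof -
  have "real_of_int ((int p+2)^2 * S (p+2) - 4*(3*(int p+1)^2+3*(int p+1)+1) * S (p+1) + 32*(int p+1)^2 * S p)
      = (real p+2)^2 * SR (p+2) - 4*(3*(real p+1)^2+3*(real p+1)+1) * SR (p+1) + 32*(real p+1)^2 * SR p"
    by (simp add: S_real)
  also have "\<dots> = 0" by (rule recR)
  finally show ?thesis by linarith
qed

theorem lemma3p1:
  fixes m n :: nat
  assumes "m > 0" and "n > 0"
  shows "[S (m*n + 1) = 4 * int (m*n + 1) * S (m*n)] (mod (int m)^2 * (int n)^2)"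
proof -
  define p where "p = m*n - 1"
  have N: "m*n = p+1" unfolding p_def using assms by simp
  define x where "x = int p"
  define D where "D = S (p+2) - 4*(x+2)*S (p+1)"
  have r: "(x+2)^2 * S (p+2) - 4*(3*(x+1)^2+3*(x+1)+1) * S (p+1) + 32*(x+1)^2 * S p = 0"
    using recI[of p] unfolding x_def .
  have "(x+2)^2 * D - (x+1)^2 * (-4*(x+1)*S (p+1) - 32 * S p)
      = (x+2)^2 * S (p+2) - 4*(3*(x+1)^2+3*(x+1)+1) * S (p+1) + 32*(x+1)^2 * S p"
    unfolding D_def by algebra
  hence eq: "(x+2)^2 * D = (x+1)^2 * (-4*(x+1)*S (p+1) - 32 * S p)" using r by simp
  have "(x+1)^2 dvd (x+2)^2 * D" unfolding eq by simp
  moreover have "coprime ((x+1)^2) ((x+2)^2)"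
    using coprime_add_one_right[of "x+1"] by (simp add: add.assoc)
  ultimately have dv: "(x+1)^2 dvd D" using coprime_dvd_mult_right_iff by blast
  have mod: "(int m)^2 * (int n)^2 = (x+1)^2" unfolding x_def
    by (metis N of_nat_1 of_nat_add of_nat_mult power_mult_distrib)
  have e1: "m*n+1 = p+2" "int (m*n+1) = x+2" "m*n = p+1" using N unfolding x_def by simp_all
  show ?thesis unfolding mod e1 cong_iff_dvd_diff using dv unfolding D_def x_def by (simp add: algebra_simps)
qed

end
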